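(* Let $q\ge2$, $d\ge1$ be integers, let $f\colon\mathbb{N}_0\to\mathbb{U}$ be $q$-multiplicative and let $c>0$. Then the estimate $$\sup_{p\in\mathbb{R}[x],\ \deg p\le d}\Big|\frac{1}{q^L}\sum_{n=0}^{q^L-1}f(n)e(p(n))\Big|\ll q^{-cL}\qquad(L\ge0)$$ holds if and only if $$\sup_{M\ge0}\ \sup_{p\in\mathbb{R}[x],\ \deg p\le d}\Big|\frac1N\sum_{n=0}^{N-1}f(n+M)e(p(n))\Big|\ll N^{-c}\qquad(N\ge1).$$
   Context: $\mathbb{N}_0=\{0,1,\dots\}$, $\mathbb{U}=\{z\in\mathbb{C}:|z|=1\}$, $e(t)=e^{2\pi i t}$. $f$ is $q$-multiplicative if $f(m+n)=f(m)f(n)$ whenever $t,m,n\ge0$, $m<q^t$, $q^t\mid n$. $X\ll Y$ means $|X|\le CY$ for a constant $C$ independent of $L$, $N$, $M$, $p$. *)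

theory Defs
  imports "HOL-Computational_Algebra.Polynomial" "HOL-Analysis.Analysis"
begin

definition e :: "real \<Rightarrow> complex" where
  "e t = exp (2 * of_real pi * \<i> * of_real t)"

definition q_multiplicative :: "nat \<Rightarrow> (nat \<Rightarrow> complex) \<Rightarrow> bool" where
  "q_multiplicative q f \<longleftrightarrow>
     (\<forall>t m n. m < q ^ t \<longrightarrow> q ^ t dvd n \<longrightarrow> f (m + n) = f m * f n)"

end

theory Submission
  imports Defs
begin


lemma norm_e [simp]: "norm (e t) = 1"
  by (simp add: e_def norm_exp_eq_Re)

lemma e_add: "e (a + b) = e a * e b"
  by (simp add: e_def ring_distribs exp_add[symmetric])

lemma e_nat_mult: "e (real k * t) = e t ^ k"
proof -
  have "e (real k * t) = exp (of_nat k * (2 * of_real pi * \<i> * of_real t))"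
    by (simp add: e_def mult_ac)
  then show ?thesis by (simp add: exp_of_nat_mult e_def)
qed

lemma e_int: "e (real_of_int k) = 1"
proof -
  have "e (real_of_int k) = exp ((2 * of_int k * pi) * \<i>)"
    by (simp add: e_def mult_ac)
  also have "\<dots> = 1" by (rule exp_integer_2pi) simp
  finally show ?thesis .
qed

lemma cnj_e: "cnj (e t) = e (- t)"
  by (simp add: e_def exp_cnj)

lemma e_eq_1: assumes "e t = 1" shows "\<exists>k::int. t = of_int k"
proof -
  from assms obtain n :: int where "Im (2 * of_real pi * \<i> * of_real t) = of_int (2 * n) * pi"
    unfolding e_def exp_eq_1 by blast
  then have "2 * pi * t = 2 * of_int n * pi" by simp
  then have "t = of_int n" by simp
  then show ?thesis by blast
qed

lemma orth:
  fixes Q n m :: nat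
  assumes "n < Q" "m < Q"
  shows "(\<Sum>k<Q. e (real k * ((real n - real m) / real Q))) = (if n = m then of_nat Q else 0)"
proof (cases "n = m")
  case True then show ?thesis by (simp add: e_def)
next
  case False
  define w where "w = e ((real n - real m) / real Q)"
  have Q0: "Q > 0" using assms by simp
  have "w \<noteq> 1"
  proof
    assume "w = 1"
    then obtain k :: int where k: "(real n - real m) / real Q = of_int k"
      using e_eq_1[of "(real n - real m) / real Q"] w_def by auto
    then have "real n - real m = real Q * of_int k" using Q0 by (simp add: field_simps)
    moreover have "\<bar>real n - real m\<bar> < real Q" using assms by auto
    ultimately have "real Q * \<bar>of_int k\<bar> < real Q * 1" by (simp add: abs_mult)
    then have "\<bar>of_int k\<bar> < (1::real)" using Q0 by (simp only: mult_less_cancel_left_pos of_nat_0_less_iff)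
    then have "k = 0" by linarith
    then show False using k False Q0 by simp
  qed
  have wQ: "w ^ Q = 1"
  proof -
    have "w ^ Q = e (real Q * ((real n - real m) / real Q))" unfolding w_def by (rule e_nat_mult[symmetric])
    also have "real Q * ((real n - real m) / real Q) = real_of_int (int n - int m)" using Q0 by simp
    finally show ?thesis by (simp only: e_int)
  qed
  have "(\<Sum>k<Q. e (real k * ((real n - real m) / real Q))) = (\<Sum>k<Q. w ^ k)"
    by (simp only: w_def e_nat_mult)
  also have "\<dots> = 0" using \<open>w \<noteq> 1\<close> wQ by (simp add: sum_gp_strict)
  finally show ?thesis using False by simp
qed

lemma parseval:
  fixes f :: "nat \<Rightarrow> complex" and Q :: nat
  shows "(\<Sum>k<Q. (norm (\<Sum>n<Q. f n * e (real k / real Q * real n)))^2) = real Q * (\<Sum>n<Q. (norm (f n))^2)"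
proof -
  have "complex_of_real (\<Sum>k<Q. (norm (\<Sum>n<Q. f n * e (real k / real Q * real n)))^2)
      = (\<Sum>k<Q. (\<Sum>n<Q. f n * e (real k / real Q * real n)) * cnj (\<Sum>m<Q. f m * e (real k / real Q * real m)))"
    by (simp only: of_real_sum complex_norm_square)
  also have "\<dots> = (\<Sum>k<Q. \<Sum>n<Q. \<Sum>m<Q. f n * cnj (f m) * e (real k * ((real n - real m) / real Q)))"
  proof (intro sum.cong refl)
    fix k assume "k \<in> {..<Q}"
    have ee: "e (real k / real Q * real n) * e (- (real k / real Q * real m)) = e (real k * ((real n - real m) / real Q))" for n m
    proof -
      have "e (real k / real Q * real n) * e (- (real k / real Q * real m)) = e (real k / real Q * real n + - (real k / real Q * real m))"
        by (simp only: e_add)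
      also have "real k / real Q * real n + - (real k / real Q * real m) = real k * ((real n - real m) / real Q)"
        by (simp add: right_diff_distrib diff_divide_distrib)
      finally show ?thesis .
    qed
    show "(\<Sum>n<Q. f n * e (real k / real Q * real n)) * cnj (\<Sum>m<Q. f m * e (real k / real Q * real m))
        = (\<Sum>n<Q. \<Sum>m<Q. f n * cnj (f m) * e (real k * ((real n - real m) / real Q)))"
      by (simp only: cnj_sum sum_product complex_cnj_mult cnj_e flip: ee) (simp only: mult_ac)
  qed
  also have "\<dots> = (\<Sum>n<Q. \<Sum>m<Q. f n * cnj (f m) * (\<Sum>k<Q. e (real k * ((real n - real m) / real Q))))"
    by (subst sum.swap, rule sum.cong, simp, subst sum.swap, simp add: sum_distrib_left)
  also have "\<dots> = (\<Sum>n<Q. \<Sum>m<Q. f n * cnj (f m) * (if n = m then of_nat Q else 0))"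
    by (intro sum.cong refl, subst orth) auto
  also have "\<dots> = (\<Sum>n<Q. f n * cnj (f n) * of_nat Q)"
    by (simp add: if_distrib cong: if_cong)
  also have "\<dots> = complex_of_real (real Q * (\<Sum>n<Q. (norm (f n))^2))"
    by (simp add: sum_distrib_left mult_ac flip: complex_norm_square)
  finally show ?thesis using of_real_eq_iff by blast
qed




definition Isum :: "(nat \<Rightarrow> complex) \<Rightarrow> real poly \<Rightarrow> nat \<Rightarrow> nat \<Rightarrow> complex" where
  "Isum f p A B = (\<Sum>n\<in>{A..<B}. f n * e (poly p (real n)))"

lemma Isum_split: "A \<le> B \<Longrightarrow> B \<le> D \<Longrightarrow> Isum f p A D = Isum f p A B + Isum f p B D"
  unfolding Isum_def by (simp add: sum.atLeastLessThan_concat)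

lemma Isum_shift: "Isum f p A (A+K) = (\<Sum>m<K. f (m+A) * e (poly (p \<circ>\<^sub>p [:real A, 1:]) (real m)))"
proof -
  have "Isum f p A (A+K) = (\<Sum>n\<in>{0+A..<K+A}. f n * e (poly p (real n)))"
    unfolding Isum_def by (simp add: add.commute)
  also have "\<dots> = (\<Sum>m\<in>{0..<K}. f (m+A) * e (poly p (real (m+A))))"
    by (rule sum.shift_bounds_nat_ivl)
  finally show ?thesis by (simp add: poly_pcompose atLeast0LessThan add.commute)
qed

context
  fixes q d :: nat and f :: "nat \<Rightarrow> complex" and C \<rho> :: real
  assumes q2: "q \<ge> 2" and fn: "\<And>n. norm (f n) = 1" and qm: "q_multiplicative q f"
    and rho1: "\<rho> > 1"
    and hyp: "\<And>L p. degree p \<le> d \<Longrightarrow> norm (\<Sum>n<q^L. f n * e (poly p (real n))) \<le> C * \<rho>^L"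
begin

lemma C_ge: "C \<ge> 1"
  using hyp[of 0 0] fn[of 0] by (simp add: e_def)

lemma block:
  assumes "q^J dvd A" "degree p \<le> d"
  shows "norm (Isum f p A (A+q^J)) \<le> C*\<rho>^J"
proof -
  have "Isum f p A (A+q^J) = (\<Sum>m<q^J. f A * (f m * e (poly (p \<circ>\<^sub>p [:real A, 1:]) (real m))))"
    unfolding Isum_shift
  proof (intro sum.cong refl)
    fix m assume "m \<in> {..<q^J}"
    then have "f (m + A) = f m * f A" using qm assms(1) unfolding q_multiplicative_def by auto
    then show "f (m+A) * e (poly (p \<circ>\<^sub>p [:real A, 1:]) (real m)) = f A * (f m * e (poly (p \<circ>\<^sub>p [:real A, 1:]) (real m)))"
      by simp
  qed
  also have "\<dots> = f A * (\<Sum>m<q^J. f m * e (poly (p \<circ>\<^sub>p [:real A, 1:]) (real m)))"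
    by (simp add: sum_distrib_left)
  finally have "norm (Isum f p A (A+q^J)) = norm (\<Sum>m<q^J. f m * e (poly (p \<circ>\<^sub>p [:real A, 1:]) (real m)))"
    by (simp add: norm_mult fn)
  also have "\<dots> \<le> C*\<rho>^J"
    by (rule hyp) (simp add: degree_pcompose assms(2))
  finally show ?thesis .
qed

lemma blocks:
  assumes "q^J dvd A" "degree p \<le> d"
  shows "norm (Isum f p A (A+a*q^J)) \<le> a*(C*\<rho>^J)"
proof (induction a)
  case 0 then show ?case by (simp add: Isum_def)
next
  case (Suc a)
  have "Isum f p A (A + Suc a * q^J) = Isum f p A (A + a*q^J) + Isum f p (A + a*q^J) (A + a*q^J + q^J)"
    by (subst Isum_split[of _ "A + a*q^J"]) (auto simp: algebra_simps)
  also have "norm \<dots> \<le> norm (Isum f p A (A + a*q^J)) + norm (Isum f p (A + a*q^J) (A + a*q^J + q^J))"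
    by (rule norm_triangle_ineq)
  also have "\<dots> \<le> a*(C*\<rho>^J) + C*\<rho>^J"
    using Suc block[of J "A + a*q^J" p] assms by (intro add_mono) auto
  finally show ?case by (simp add: algebra_simps)
qed

definition "P J = 1 + q*C*(\<Sum>i<J. \<rho>^i)"

lemma P_Suc: "P (Suc J) = P J + q*C*\<rho>^J"
  by (simp add: P_def algebra_simps)

lemma P_mono: "P J \<le> P (Suc J)"
  using C_ge rho1 by (simp add: P_Suc)

lemma pre:
  "q^J dvd A \<Longrightarrow> N \<le> q^J \<Longrightarrow> degree p \<le> d \<Longrightarrow> norm (Isum f p A (A+N)) \<le> P J"
proof (induction J arbitrary: A N)
  case 0
  then have "N = 0 \<or> N = 1" by auto
  then show ?case
    by (auto simp: P_def Isum_def fn norm_mult)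
next
  case (Suc J)
  define a where "a = N div q^J"
  define r where "r = N mod q^J"
  have N: "N = A + a*q^J + r - A" unfolding a_def r_def using div_mult_mod_eq[of N "q^J"] by simp
  have aq: "a \<le> q"
  proof -
    have "N div q^J \<le> (q * q^J) div q^J" using Suc.prems(2) by (intro div_le_mono) simp
    then show ?thesis using q2 by (simp add: a_def)
  qed
  have rq: "r \<le> q^J" unfolding r_def using q2 by (simp add: order.strict_implies_order)
  have dvdJ: "q^J dvd A" using Suc.prems(1) by (metis dvd_mult_left mult.commute power_Suc)
  have "Isum f p A (A + N) = Isum f p A (A + a*q^J) + Isum f p (A + a*q^J) (A + a*q^J + r)"
    using N by (subst Isum_split[of _ "A + a*q^J"]) (auto simp: add.assoc)
  also have "norm \<dots> \<le> norm (Isum f p A (A + a*q^J)) + norm (Isum f p (A + a*q^J) (A + a*q^J + r))"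
    by (rule norm_triangle_ineq)
  also have "\<dots> \<le> a*(C*\<rho>^J) + P J"
    using blocks[OF dvdJ Suc.prems(3)] Suc.IH[of "A + a*q^J" r] dvdJ rq Suc.prems(3)
    by (intro add_mono) auto
  also have "\<dots> \<le> q*(C*\<rho>^J) + P J"
    using aq C_ge rho1 by (intro add_mono mult_right_mono) auto
  finally show ?case by (simp add: P_Suc algebra_simps)
qed

lemma pre2:
  assumes "q^J dvd A" "degree p \<le> d"
  shows "norm (Isum f p A (A+N)) \<le> (N div q^J)*(C*\<rho>^J) + P J"
proof -
  define a where "a = N div q^J"
  define r where "r = N mod q^J"
  have N: "N = A + a*q^J + r - A" unfolding a_def r_def using div_mult_mod_eq[of N "q^J"] by simp
  have rq: "r \<le> q^J" unfolding r_def using q2 by (simp add: order.strict_implies_order)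
  have dvd2: "q^J dvd A + a*q^J" using assms(1) by simp
  have "Isum f p A (A + N) = Isum f p A (A + a*q^J) + Isum f p (A + a*q^J) (A + a*q^J + r)"
    using N by (subst Isum_split[of _ "A + a*q^J"]) (auto simp: add.assoc)
  also have "norm \<dots> \<le> norm (Isum f p A (A + a*q^J)) + norm (Isum f p (A + a*q^J) (A + a*q^J + r))"
    by (rule norm_triangle_ineq)
  also have "\<dots> \<le> a*(C*\<rho>^J) + P J"
    using blocks[OF assms] pre[OF dvd2 rq assms(2)] by (intro add_mono) auto
  finally show ?thesis by (simp add: a_def)
qed

lemma general:
  assumes "N < q^(Suc K)" "degree p \<le> d"
  shows "norm (Isum f p M (M+N)) \<le> 2 * P (Suc K)"
proof -
  define A where "A = q^K * (M div q^K)"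
  define s where "s = M mod q^K"
  have M: "M = A + s" unfolding A_def s_def by simp
  have dA: "q^K dvd A" unfolding A_def by simp
  have sq: "s \<le> q^K" unfolding s_def using q2 by (simp add: order.strict_implies_order)
  have "s < q^K" using q2 by (simp add: s_def)
  then have "s + N < q^K + q*q^K" using assms(1) by simp
  then have "(s + N) div q^K < Suc q"
    using q2 by (simp add: less_mult_imp_div_less)
  then have dq: "(s + N) div q^K \<le> q" by simp
  have "Isum f p A (M+N) = Isum f p A M + Isum f p M (M+N)"
    by (rule Isum_split) (auto simp: M)
  then have "Isum f p M (M+N) = Isum f p A (A + (s+N)) - Isum f p A (A+s)"
    by (simp add: M add.assoc)
  then have "norm (Isum f p M (M+N)) \<le> norm (Isum f p A (A + (s+N))) + norm (Isum f p A (A+s))"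
    by (simp add: norm_triangle_ineq4)
  also have "\<dots> \<le> ((s + N) div q^K)*(C*\<rho>^K) + P K + P K"
    using pre2[OF dA assms(2)] pre[OF dA sq assms(2)] by (intro add_mono) auto
  also have "\<dots> \<le> q*(C*\<rho>^K) + P K + P K"
    using dq C_ge rho1 by (intro add_mono mult_right_mono) auto
  also have "\<dots> \<le> 2 * P (Suc K)"
  proof -
    have "0 \<le> q*(C*\<rho>^K)" using C_ge rho1 by simp
    then show ?thesis by (simp add: P_Suc mult.assoc mult.left_commute)
  qed
  finally show ?thesis .
qed

lemma P_bound: "P J \<le> (1 + q*C/(\<rho>-1)) * \<rho>^J"
proof (induction J)
  case 0 then show ?case using C_ge rho1 by (simp add: P_def)
next
  case (Suc J)
  have "P (Suc J) \<le> (1 + q*C/(\<rho>-1)) * \<rho>^J + q*C*\<rho>^J" using Suc by (simp add: P_Suc)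
  also have "\<dots> \<le> (1 + q*C/(\<rho>-1)) * \<rho>^Suc J"
  proof -
    have "1 + q*C/(\<rho>-1) + q*C = (1 + q*C/(\<rho>-1)) * \<rho> - (\<rho> - 1)"
      using rho1 by (simp add: field_simps)
    then have "1 + q*C/(\<rho>-1) + q*C \<le> (1 + q*C/(\<rho>-1)) * \<rho>" using rho1 by simp
    then have "(1 + q*C/(\<rho>-1) + q*C) * \<rho>^J \<le> (1 + q*C/(\<rho>-1)) * \<rho> * \<rho>^J"
      using rho1 by (intro mult_right_mono) auto
    then show ?thesis by (simp add: algebra_simps)
  qed
  finally show ?case .
qed

end



lemma c_lt_1:
  fixes q d :: nat and f :: "nat \<Rightarrow> complex" and c C :: real
  assumes q2: "q \<ge> 2" and d1: "d \<ge> 1" and fn: "\<And>n. norm (f n) = 1"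
    and H: "\<forall>L::nat. \<forall>p::real poly. degree p \<le> d \<longrightarrow>
            norm ((1 / of_nat (q ^ L)) * (\<Sum>n<q ^ L. f n * e (poly p (real n))))
              \<le> C * real q powr (- c * real L)"
  shows "c < 1"
proof (rule ccontr)
  assume "\<not> c < 1"
  then have c1: "c \<ge> 1" by simp
  have C0: "C \<ge> 0" using H[rule_format, of 0 0] fn[of 0] q2 by (simp add: e_def)
  have bound: "real (q^L) \<le> C^2" for L
  proof -
    define Q where "Q = q^L"
    have Q0: "Q > 0" using q2 by (simp add: Q_def)
    have Sk: "norm (\<Sum>n<Q. f n * e (real k / real Q * real n)) \<le> C" for k
    proof -
      have deg: "degree [:0, real k / real Q:] \<le> d" using d1 by simp
      have pe: "poly [:0, real k / real Q:] (real n) = real k / real Q * real n" for n by simp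
      have nq: "norm (1 / (of_nat Q :: complex) * z) = norm z / real Q" for z
        by (simp add: norm_mult norm_divide)
      from H[rule_format, OF deg, of L]
      have "norm (\<Sum>n<Q. f n * e (real k / real Q * real n)) / real Q \<le> C * real q powr (- c * real L)"
        unfolding pe Q_def[symmetric] nq .
      then have "norm (\<Sum>n<Q. f n * e (real k / real Q * real n)) \<le> C * (real q powr (- c * real L) * real Q)"
        using Q0 by (simp add: divide_le_eq mult_ac)
      also have "real q powr (- c * real L) * real Q = real q powr ((1 - c) * real L)"
        using q2 by (simp add: Q_def powr_realpow[symmetric] powr_add[symmetric] algebra_simps)
      also have "C * \<dots> \<le> C * 1"
        using powr_mono[of "(1-c)*real L" 0 "real q"] q2 c1 C0
        by (intro mult_left_mono) (simp_all add: mult_nonpos_nonneg)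
      finally show ?thesis by simp
    qed
    have "real Q * real Q = (\<Sum>k<Q. (norm (\<Sum>n<Q. f n * e (real k / real Q * real n)))^2)"
      by (subst parseval) (simp add: fn)
    also have "\<dots> \<le> (\<Sum>k<Q. C^2)"
      by (intro sum_mono power_mono Sk) simp
    also have "\<dots> = real Q * C^2" by simp
    finally have "real Q \<le> C^2" using Q0 by simp
    then show ?thesis by (simp add: Q_def)
  qed
  define L where "L = nat \<lceil>C^2\<rceil>"
  have "real L \<ge> C^2" unfolding L_def by linarith
  moreover have "L < 2^L" by (rule less_exp)
  moreover have "(2::nat)^L \<le> q^L" using q2 by (intro power_mono) auto
  ultimately have "L < q^L" by linarith
  then have "real L < real (q^L)" by (simp only: of_nat_less_iff)
  with \<open>real L \<ge> C^2\<close> have "real (q^L) > C^2" by linarith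
  with bound[of L] show False by simp
qed




theorem lemmaA1:
  fixes q d :: nat and f :: "nat \<Rightarrow> complex" and c :: real
  assumes "q \<ge> 2" and "d \<ge> 1"
    and "\<And>n. norm (f n) = 1"
    and "q_multiplicative q f"
    and "c > 0"
  shows "(\<exists>C. \<forall>L::nat. \<forall>p::real poly. degree p \<le> d \<longrightarrow>
            norm ((1 / of_nat (q ^ L)) * (\<Sum>n<q ^ L. f n * e (poly p (real n))))
              \<le> C * real q powr (- c * real L))
     \<longleftrightarrow>
         (\<exists>C. \<forall>N::nat. \<forall>M::nat. \<forall>p::real poly. N \<ge> 1 \<longrightarrow> degree p \<le> d \<longrightarrow>
            norm ((1 / of_nat N) * (\<Sum>n<N. f (n + M) * e (poly p (real n))))
              \<le> C * real N powr (- c))"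
proof
  assume "\<exists>C. \<forall>L::nat. \<forall>p::real poly. degree p \<le> d \<longrightarrow>
            norm ((1 / of_nat (q ^ L)) * (\<Sum>n<q ^ L. f n * e (poly p (real n))))
              \<le> C * real q powr (- c * real L)"
  then obtain C where H: "\<forall>L::nat. \<forall>p::real poly. degree p \<le> d \<longrightarrow>
            norm ((1 / of_nat (q ^ L)) * (\<Sum>n<q ^ L. f n * e (poly p (real n))))
              \<le> C * real q powr (- c * real L)" by blast
  have c1: "c < 1" by (rule c_lt_1[OF assms(1,2,3) H])
  define \<rho> where "\<rho> = real q powr (1 - c)"
  have q0: "real q > 0" using assms(1) by simp
  have rho1: "\<rho> > 1" unfolding \<rho>_def using assms(1) c1 by (intro gr_one_powr) auto
  have rhoL: "\<rho>^L = real q powr ((1 - c) * real L)" for L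
    unfolding \<rho>_def using q0 by (simp add: powr_realpow[symmetric] powr_powr)
  have hyp: "norm (\<Sum>n<q^L. f n * e (poly p (real n))) \<le> C * \<rho>^L" if "degree p \<le> d" for L p
  proof -
    have nq: "norm (1 / (of_nat (q^L) :: complex) * z) = norm z / real (q^L)" for z
      by (simp add: norm_mult norm_divide norm_power)
    have Q0: "real (q^L) > 0" using q0 by simp
    from H[rule_format, OF that, of L]
    have "norm (\<Sum>n<q^L. f n * e (poly p (real n))) / real (q^L) \<le> C * real q powr (- c * real L)"
      unfolding nq .
    then have "norm (\<Sum>n<q^L. f n * e (poly p (real n))) \<le> C * (real q powr (- c * real L) * real (q^L))"
      using Q0 by (simp add: divide_le_eq mult_ac)
    also have "real q powr (- c * real L) * real (q^L) = real q powr ((1 - c) * real L)"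
      using q0 by (simp add: powr_realpow[symmetric] powr_add[symmetric] algebra_simps)
    finally show ?thesis by (simp add: rhoL)
  qed
  define D where "D = 1 + q*C/(\<rho>-1)"
  show "\<exists>C. \<forall>N::nat. \<forall>M::nat. \<forall>p::real poly. N \<ge> 1 \<longrightarrow> degree p \<le> d \<longrightarrow>
            norm ((1 / of_nat N) * (\<Sum>n<N. f (n + M) * e (poly p (real n))))
              \<le> C * real N powr (- c)"
  proof (intro exI[of _ "2 * D * \<rho>"] allI impI)
    fix N M :: nat and p :: "real poly"
    assume N1: "N \<ge> 1" and dp: "degree p \<le> d"
    obtain K where K: "q^K \<le> N" "N < q^(K+1)" using ex_power_ivl1[OF assms(1) N1] by blast
    define p' where "p' = p \<circ>\<^sub>p [:- real M, 1:]"
    have dp': "degree p' \<le> d" using dp by (simp add: p'_def degree_pcompose)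
    have T: "(\<Sum>n<N. f (n + M) * e (poly p (real n))) = Isum f p' M (M+N)"
      unfolding Isum_shift p'_def by (intro sum.cong refl) (simp add: poly_pcompose)
    have "norm (Isum f p' M (M+N)) \<le> 2 * P q C \<rho> (Suc K)"
      using general[OF assms(1,3,4) rho1 hyp, where N=N and K=K and p=p' and M=M] K dp' by simp
    also have "\<dots> \<le> 2 * (D * \<rho>^Suc K)"
      using P_bound[OF assms(1,3,4) rho1 hyp, where J="Suc K"] by (simp add: D_def)
    also have "\<dots> = 2 * D * \<rho> * \<rho>^K" by simp
    also have "\<dots> \<le> 2 * D * \<rho> * real N powr (1 - c)"
    proof -
      have C1: "C \<ge> 1" using C_ge[OF assms(1,3,4) rho1 hyp] .
      have "D \<ge> 0" unfolding D_def using C1 rho1 by simp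
      moreover have "\<rho>^K \<le> real N powr (1 - c)"
      proof -
        have "\<rho>^K = real (q^K) powr (1 - c)"
          using q0 by (simp add: rhoL powr_realpow[symmetric] powr_powr mult_ac)
        also have "\<dots> \<le> real N powr (1 - c)"
          using K c1 by (intro powr_mono2) auto
        finally show ?thesis .
      qed
      ultimately show ?thesis using rho1 by (intro mult_left_mono) auto
    qed
    finally have bnd: "norm (\<Sum>n<N. f (n + M) * e (poly p (real n))) \<le> 2 * D * \<rho> * real N powr (1 - c)"
      unfolding T .
    have N0: "real N > 0" using N1 by simp
    have "norm ((1 / of_nat N) * (\<Sum>n<N. f (n + M) * e (poly p (real n))))
        = norm (\<Sum>n<N. f (n + M) * e (poly p (real n))) / real N"
      by (simp add: norm_mult norm_divide)
    also have "\<dots> \<le> 2 * D * \<rho> * real N powr (1 - c) / real N"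
      using bnd N0 by (simp add: divide_right_mono)
    also have "2 * D * \<rho> * real N powr (1 - c) / real N = 2 * D * \<rho> * real N powr (- c)"
      using N0 by (simp add: powr_diff powr_minus_divide)
    finally show "norm ((1 / of_nat N) * (\<Sum>n<N. f (n + M) * e (poly p (real n))))
              \<le> 2 * D * \<rho> * real N powr (- c)" by simp
  qed
next
  assume "\<exists>C. \<forall>N::nat. \<forall>M::nat. \<forall>p::real poly. N \<ge> 1 \<longrightarrow> degree p \<le> d \<longrightarrow>
            norm ((1 / of_nat N) * (\<Sum>n<N. f (n + M) * e (poly p (real n))))
              \<le> C * real N powr (- c)"
  then obtain C where H: "\<forall>N::nat. \<forall>M::nat. \<forall>p::real poly. N \<ge> 1 \<longrightarrow> degree p \<le> d \<longrightarrow>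
            norm ((1 / of_nat N) * (\<Sum>n<N. f (n + M) * e (poly p (real n))))
              \<le> C * real N powr (- c)" by blast
  show "\<exists>C. \<forall>L::nat. \<forall>p::real poly. degree p \<le> d \<longrightarrow>
            norm ((1 / of_nat (q ^ L)) * (\<Sum>n<q ^ L. f n * e (poly p (real n))))
              \<le> C * real q powr (- c * real L)"
  proof (intro exI[of _ C] allI impI)
    fix L :: nat and p :: "real poly"
    assume dp: "degree p \<le> d"
    have q0: "real q > 0" using assms(1) by simp
    have N1: "q^L \<ge> 1" using assms(1) by simp
    have "real (q^L) powr (- c) = real q powr (- c * real L)"
      using q0 by (simp add: powr_realpow[symmetric] powr_powr mult_ac)
    then show "norm ((1 / of_nat (q ^ L)) * (\<Sum>n<q ^ L. f n * e (poly p (real n))))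
              \<le> C * real q powr (- c * real L)"
      using H[rule_format, OF N1 dp, of 0] by simp
  qed
qed


end
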